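(* Let $\mathcal{K}$ be a discrete index set and, for each $k\in\mathcal{K}$, let $\Theta_k\subseteq\mathbb{R}^{n_k}$. Let $\pi$ be a probability distribution on $\mathcal{X}=\bigcup_{k\in\mathcal{K}}(\{k\}\times\Theta_k)$ with density $\pi(\mathbf{x})=\pi(k)\pi_k(\boldsymbol\theta_k)$ for $\mathbf{x}=(k,\boldsymbol\theta_k)$, where $\pi(k)$ is the marginal probability of $k$ and $\pi_k$ is the conditional density on $\Theta_k$. Let $\nu$ be a univariate reference distribution with density, write $\nu_n:=\otimes_n\nu$ (and also $\nu_n(\cdot)$ for its density, with $\nu_0(\cdot)\equiv 1$), and let $\{j_k\}_{k\in\mathcal{K}}$ be discrete model-jump distributions on $\mathcal{K}$. For each $k$ let $T_k:\mathbb{R}^{n_k}\to\mathbb{R}^{n_k}$ be a diffeomorphism (on the relevant supports), and suppose that $T_k\sharp\pi_k=\otimes_{n_k}\nu$ for every $k\in\mathcal{K}$. Suppose RJMCMC across-model proposals from $\mathbf{x}=(k,\boldsymbol\theta_k)$ to $\mathbf{x}'=(k',\boldsymbol\theta'_{k'})$ with $k'\sim j_k$ are constructed as follows, where for each pair with $n_{k'}\ge n_k$, setting $w_k=n_{k'}-n_k$, $\bar h_{k,k'}:\mathbb{R}^{n_k}\times\mathbb{R}^{w_k}\to\mathbb{R}^{n_{k'}}$ is a volume-preserving diffeomorphism (absolute Jacobian determinant identically $1$) satisfying $\bar h_{k,k'}\sharp\otimes_{n_{k'}}\nu=\otimes_{n_{k'}}\nu$: (i) if $n_{k'}\ge n_k$: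 $\mathbf{z}_k=T_k(\boldsymbol\theta_k)$, draw $\mathbf{u}_k\sim\nu_{w_k}$, set $\mathbf{z}_{k'}=\bar h_{k,k'}(\mathbf{z}_k,\mathbf{u}_k)$ and $\boldsymbol\theta'_{k'}=T_{k'}^{-1}(\mathbf{z}_{k'})$; (ii) if $n_{k'}<n_k$: $\mathbf{z}_k=T_k(\boldsymbol\theta_k)$, set $(\mathbf{z}_{k'},\mathbf{u}_{k'})=\bar h_{k',k}^{-1}(\mathbf{z}_k)$ (the auxiliary part $\mathbf{u}_{k'}\in\mathbb{R}^{n_k-n_{k'}}$ is discarded) and $\boldsymbol\theta'_{k'}=T_{k'}^{-1}(\mathbf{z}_{k'})$. Writing $h_{k,k'}$ for the resulting diffeomorphism $(\boldsymbol\theta_k,\mathbf{u}_k)\mapsto(\boldsymbol\theta'_{k'},\mathbf{u}_{k'})$ (with empty auxiliary vectors where appropriate), the RJMCMC acceptance probability $$\alpha(\mathbf{x},\mathbf{x}')=1\wedge\frac{\pi(\mathbf{x}')\,j_{k'}(k)\,g_{k',k}(\mathbf{u}_{k'})}{\pi(\mathbf{x})\,j_k(k')\,g_{k,k'}(\mathbf{u}_k)}\,\big|J_{h_{k,k'}}(\boldsymbol\theta_k,\mathbf{u}_k)\big|,$$ where $g_{k,k'}=\nu_{w_k}$ is the density of the auxiliary variables drawn in the forward move and $g_{k',k}$ that of the reverse move (equal to $1$ when the corresponding auxiliary vector is empty), reduces to $$\alpha(\mathbf{x},\mathbf{x}')=1\wedge\frac{\pi(k')}{\pi(k)}\frac{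j_{k'}(k)}{j_k(k')}.$$
   Context: For a map $T$ and distribution $\mu$, $T\sharp\mu$ denotes the pushforward (the law of $T(\mathbf{Z})$ for $\mathbf{Z}\sim\mu$). $\otimes_n\nu$ denotes the $n$-fold product of $\nu$. $|J_f(\cdot)|$ denotes the absolute value of the Jacobian determinant of $f$. $j_k(k')$ is the probability of proposing model $k'$ from model $k$, and $\wedge$ denotes minimum. *)

theory Defs
  imports "HOL-Analysis.Analysis" "HOL-Probability.Probability"
begin

definition prod_dens :: "(real \<Rightarrow> real) \<Rightarrow> real^'n::finite \<Rightarrow> real" where
  "prod_dens f v = (\<Prod>i\<in>UNIV. f (v $ i))"

text \<open>A pair (z, u) in R^{n_k} x R^{w} is encoded as a single vector of
  R^{n_{k'}} (index type 'm) via an injection e of the index type 'n into 'm: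
  the coordinates in range e carry z, the remaining w coordinates carry u.\<close>
definition main_coords :: "('n \<Rightarrow> 'm) \<Rightarrow> real^'m::finite \<Rightarrow> real^'n::finite" where
  "main_coords e y = (\<chi> a. y $ e a)"

definition join_coords :: "('n::finite \<Rightarrow> 'm::finite) \<Rightarrow> real^'n \<Rightarrow> real^'m \<Rightarrow> real^'m" where
  "join_coords e z y = (\<chi> i. if i \<in> range e then z $ inv e i else y $ i)"

text \<open>Density of the auxiliary vector u (the coordinates outside range e):
  the (n_{k'} - n_k)-fold product of f; empty product = 1.\<close>
definition aux_dens :: "(real \<Rightarrow> real) \<Rightarrow> ('n::finite \<Rightarrow> 'm::finite) \<Rightarrow> real^'m \<Rightarrow> real" where
  "aux_dens f e y = (\<Prod>i\<in>UNIV - range e. f (y $ i))"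

definition abs_jac :: "(real^'n::finite \<Rightarrow> real^'n) \<Rightarrow> real^'n \<Rightarrow> real" where
  "abs_jac f x = \<bar>det (matrix (frechet_derivative f (at x)))\<bar>"

definition diffeo_between :: "(real^'n::finite) set \<Rightarrow> (real^'n) set \<Rightarrow> (real^'n \<Rightarrow> real^'n) \<Rightarrow> bool" where
  "diffeo_between U V f \<longleftrightarrow>
     open U \<and> open V \<and> bij_betw f U V \<and>
     (\<forall>x\<in>U. f differentiable (at x)) \<and>
     continuous_on U (\<lambda>x. matrix (frechet_derivative f (at x))) \<and>
     (\<forall>y\<in>V. the_inv_into U f differentiable (at y)) \<and>
     continuous_on V (\<lambda>y. matrix (frechet_derivative (the_inv_into U f) (at y)))"

definition fwd_map ::
  "('n::finite \<Rightarrow> 'm::finite) \<Rightarrow> (real^'n \<Rightarrow> real^'n) \<Rightarrow> (real^'m) set \<Rightarrow> (real^'m \<Rightarrow> real^'m)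
     \<Rightarrow> (real^'m \<Rightarrow> real^'m) \<Rightarrow> real^'m \<Rightarrow> real^'m" where
  "fwd_map e T U' T' hbar y =
     the_inv_into U' T' (hbar (join_coords e (T (main_coords e y)) y))"

definition rev_map ::
  "('n::finite \<Rightarrow> 'm::finite) \<Rightarrow> (real^'n) set \<Rightarrow> (real^'n \<Rightarrow> real^'n) \<Rightarrow> (real^'m \<Rightarrow> real^'m)
     \<Rightarrow> (real^'m \<Rightarrow> real^'m) \<Rightarrow> real^'m \<Rightarrow> real^'m" where
  "rev_map e U T T' hbar th' =
     (let y = inv hbar (T' th') in join_coords e (the_inv_into U T (main_coords e y)) y)"

definition rj_accept :: "real \<Rightarrow> real \<Rightarrow> real \<Rightarrow> real \<Rightarrow> real \<Rightarrow> real \<Rightarrow> real \<Rightarrow> real" where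
  "rj_accept pix pix' jfwd jrev gfwd grev J =
     min 1 ((pix' * jrev * grev) / (pix * jfwd * gfwd) * J)"

end

theory Submission
  imports Defs
begin

typedef 'a wo = "UNIV :: 'a set" by auto

definition wo_enc :: "'a::finite \<Rightarrow> nat" where
  "wo_enc = (SOME f. inj f)"

lemma wo_enc_inj: "inj (wo_enc :: 'a::finite \<Rightarrow> nat)"
proof -
  have "\<exists>f::'a \<Rightarrow> nat. inj f"
    using finite_imp_inj_to_nat_seg[of "UNIV :: 'a set"] by auto
  then show ?thesis unfolding wo_enc_def by (rule someI_ex)
qed

instantiation wo :: (finite) linorder
begin
definition less_eq_wo :: "'a wo \<Rightarrow> 'a wo \<Rightarrow> bool" where
  "less_eq_wo x y \<longleftrightarrow> wo_enc (Rep_wo x) \<le> wo_enc (Rep_wo y)"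
definition less_wo :: "'a wo \<Rightarrow> 'a wo \<Rightarrow> bool" where
  "less_wo x y \<longleftrightarrow> wo_enc (Rep_wo x) < wo_enc (Rep_wo y)"
instance
  by standard (auto simp: less_eq_wo_def less_wo_def inj_eq[OF wo_enc_inj] Rep_wo_inject)
end

instance wo :: (finite) finite
proof
  have "(UNIV :: 'a wo set) = Abs_wo ` UNIV"
    by (metis Rep_wo_inverse surj_def)
  moreover have "finite (Abs_wo ` (UNIV::'a set))" by simp
  ultimately show "finite (UNIV :: 'a wo set)" by simp
qed

instance wo :: (finite) wellorder
proof -
  have "wf {(x :: 'a wo, y). x < y}"
    by (rule wf_subset[OF wf_measure[of "\<lambda>x. wo_enc (Rep_wo x)"]]) (auto simp: less_wo_def)
  thus "OFCLASS('a wo, wellorder_class)" by (rule wf_wellorderI) intro_classes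
qed

definition ext_perm :: "('n \<Rightarrow> 'm) \<Rightarrow> ('n \<Rightarrow> 'n) \<Rightarrow> 'm \<Rightarrow> 'm" where
  "ext_perm e q i = (if i \<in> range e then e (q (inv e i)) else i)"

lemma ext_perm_id: "inj e \<Longrightarrow> ext_perm e id = id"
  by (auto simp: ext_perm_def fun_eq_iff f_inv_into_f)

lemma ext_perm_comp_transpose:
  assumes "inj e"
  shows "ext_perm e (Transposition.transpose a b \<circ> p) = Transposition.transpose (e a) (e b) \<circ> ext_perm e p"
  using assms by (auto simp: ext_perm_def fun_eq_iff Transposition.transpose_def inj_eq)

lemma ext_perm_permutes_sign:
  fixes e :: "'n::finite \<Rightarrow> 'm::finite"
  assumes "inj e" "q permutes (UNIV::'n set)"
  shows "ext_perm e q permutes (UNIV::'m set) \<and> sign (ext_perm e q) = sign q"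
  using assms(2) finite_class.finite_UNIV[where 'a='n]
proof (induction rule: permutes_induct)
  case id
  then show ?case using ext_perm_id[OF assms(1)] permutes_id[of UNIV] sign_id by metis
next
  case (swap a b p)
  have ea: "e a \<noteq> e b" using swap assms(1) by (auto simp: inj_eq)
  have pm: "permutation (ext_perm e p)" using swap permutation_permutes finite_class.finite_UNIV by blast
  have pp: "permutation p" using swap permutation_permutes finite_class.finite_UNIV by blast
  have t1: "Transposition.transpose (e a) (e b) \<circ> ext_perm e p permutes UNIV"
    using swap by (intro permutes_compose permutes_swap_id) auto
  have "sign (Transposition.transpose (e a) (e b) \<circ> ext_perm e p)
      = sign (Transposition.transpose (e a) (e b)) * sign (ext_perm e p)"
    by (rule sign_compose[OF permutation_swap_id pm])
  moreover have "sign (Transposition.transpose a b \<circ> p) = sign (Transposition.transpose a b) * sign p"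
    by (rule sign_compose[OF permutation_swap_id pp])
  ultimately show ?case
    unfolding ext_perm_comp_transpose[OF assms(1)]
    using swap ea t1 by (simp only: sign_swap_id)
qed

lemma det_block_ext:
  fixes A :: "real^'n::finite^'n" and e :: "'n \<Rightarrow> 'm::finite"
  assumes e: "inj e"
  shows "det (\<chi> i j. if i \<in> range e then (if j \<in> range e then A $ inv e i $ inv e j else 0)
                    else (if i = j then 1 else 0) :: real^'m^'m) = det A"
proof -
  define M where "M = (\<chi> i j. if i \<in> range e then (if j \<in> range e then A $ inv e i $ inv e j else 0)
                    else (if i = j then 1 else 0) :: real^'m^'m)"
  let ?P = "{p. p permutes (UNIV::'m set)}"
  let ?Q = "{q. q permutes (UNIV::'n set)}"
  let ?t = "\<lambda>p. of_int (sign p) * (\<Prod>i\<in>UNIV. M$i$p i)"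
  have sub: "ext_perm e ` ?Q \<subseteq> ?P" using ext_perm_permutes_sign[OF e] by auto
  have injx: "inj_on (ext_perm e) ?Q"
  proof (rule inj_onI)
    fix q q' assume "q \<in> ?Q" "q' \<in> ?Q" "ext_perm e q = ext_perm e q'"
    then have "\<And>a. ext_perm e q (e a) = ext_perm e q' (e a)" by simp
    then show "q = q'" using e by (auto simp: ext_perm_def fun_eq_iff inj_eq)
  qed
  have zero: "?t p = 0" if "p \<in> ?P - ext_perm e ` ?Q" for p
  proof (rule ccontr)
    assume "?t p \<noteq> 0"
    then have nz: "\<And>i. M$i$p i \<noteq> 0" by auto
    have fix_out: "p i = i" if "i \<notin> range e" for i
      using nz[of i] that by (auto simp: M_def split: if_splits)
    have in_r: "p i \<in> range e" if "i \<in> range e" for i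
      using nz[of i] that by (auto simp: M_def split: if_splits)
    define q where "q a = inv e (p (e a))" for a
    have pp: "p permutes UNIV" using that by auto
    have "inj q"
    proof (rule injI)
      fix a b assume "q a = q b"
      then have "p (e a) = p (e b)" unfolding q_def using in_r
        by (metis f_inv_into_f rangeI)
      then show "a = b" using pp e by (metis permutes_inj inj_eq)
    qed
    then have qp: "q permutes UNIV"
      by (intro bij_imp_permutes) (auto simp: bij_def finite_UNIV_inj_surj)
    have "ext_perm e q = p"
    proof
      fix i show "ext_perm e q i = p i"
        using fix_out in_r by (cases "i \<in> range e") (auto simp: ext_perm_def q_def f_inv_into_f)
    qed
    then show False using that qp by auto
  qed
  have "det M = sum ?t ?P" unfolding det_def by simp
  also have "\<dots> = sum ?t (ext_perm e ` ?Q)"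
    using zero sub by (intro sum.mono_neutral_right) auto
  also have "\<dots> = sum (?t \<circ> ext_perm e) ?Q" using injx by (rule sum.reindex)
  also have "\<dots> = sum (\<lambda>q. of_int (sign q) * (\<Prod>a\<in>UNIV. A$a$q a)) ?Q"
  proof (rule sum.cong[OF refl])
    fix q assume q: "q \<in> ?Q"
    have "(\<Prod>i\<in>UNIV. M$i$ext_perm e q i) = (\<Prod>i\<in>range e. M$i$ext_perm e q i) * (\<Prod>i\<in>UNIV - range e. M$i$ext_perm e q i)"
      by (subst prod.subset_diff[of "range e"]) (auto simp: mult.commute)
    also have "(\<Prod>i\<in>UNIV - range e. M$i$ext_perm e q i) = 1"
      by (intro prod.neutral) (auto simp: M_def ext_perm_def)
    also have "(\<Prod>i\<in>range e. M$i$ext_perm e q i) = (\<Prod>a\<in>UNIV. M$(e a)$ext_perm e q (e a))"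
      using e by (simp add: prod.reindex)
    also have "\<dots> = (\<Prod>a\<in>UNIV. A$a$q a)"
      using e by (intro prod.cong) (auto simp: M_def ext_perm_def)
    finally show "(?t \<circ> ext_perm e) q = of_int (sign q) * (\<Prod>a\<in>UNIV. A$a$q a)"
      using ext_perm_permutes_sign[OF e] q by simp
  qed
  also have "\<dots> = det A" unfolding det_def by simp
  finally show ?thesis unfolding M_def .
qed

definition to_wo :: "real^'a \<Rightarrow> real^('a wo)" where
  "to_wo x = (\<chi> i. x $ Rep_wo i)"
definition of_wo :: "real^('a wo) \<Rightarrow> real^'a" where
  "of_wo y = (\<chi> a. y $ Abs_wo a)"

lemma of_to_wo[simp]: "of_wo (to_wo x) = x"
  by (simp add: of_wo_def to_wo_def Abs_wo_inverse vec_eq_iff)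
lemma to_of_wo[simp]: "to_wo (of_wo y) = y"
  by (simp add: of_wo_def to_wo_def Rep_wo_inverse vec_eq_iff)

lemma linear_to_wo: "linear to_wo"
  by (auto simp: linear_iff to_wo_def vec_eq_iff)
lemma linear_of_wo: "linear of_wo"
  by (auto simp: linear_iff of_wo_def vec_eq_iff)

lemma cont_to_wo: "continuous_on UNIV to_wo"
  unfolding to_wo_def by (intro continuous_intros)
lemma cont_of_wo: "continuous_on UNIV of_wo"
  unfolding of_wo_def by (intro continuous_intros)

lemma meas_to_wo[measurable]: "to_wo \<in> borel_measurable borel"
  by (rule borel_measurable_continuous_onI[OF cont_to_wo])
lemma meas_of_wo[measurable]: "of_wo \<in> borel_measurable borel"
  by (rule borel_measurable_continuous_onI[OF cont_of_wo])

lemma prod_Basis_cart: "(\<Prod>b\<in>Basis. (v::real^'n::finite) \<bullet> b) = (\<Prod>i\<in>UNIV. v $ i)"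
  by (simp add: Basis_vec_def cart_eq_inner_axis axis_eq_axis prod.UNION_disjoint)

lemma ball_Basis_cart: "(\<forall>b\<in>Basis. (l::real^'n::finite) \<bullet> b \<le> u \<bullet> b) \<longleftrightarrow> (\<forall>i. l $ i \<le> u $ i)"
  by (auto simp: Basis_vec_def cart_eq_inner_axis)

lemma lborel_to_wo: "distr lborel borel (to_wo :: real^'a::finite \<Rightarrow> _) = lborel"
proof (rule lborel_eqI[symmetric])
  fix l u :: "real^('a wo)"
  assume lu: "\<And>b. b \<in> Basis \<Longrightarrow> l \<bullet> b \<le> u \<bullet> b"
  then have lu': "\<And>i. l $ i \<le> u $ i" using ball_Basis_cart by blast
  have pre: "to_wo -` box l u = box (of_wo l) (of_wo u)"
    by (auto simp: mem_box_cart to_wo_def of_wo_def) (metis Abs_wo_inverse Rep_wo_inverse UNIV_I)+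
  have "emeasure (distr lborel borel to_wo) (box l u) = emeasure lborel (to_wo -` box l u)"
    by (subst emeasure_distr) auto
  also have "\<dots> = emeasure lborel (box (of_wo l) (of_wo u))" using pre by simp
  also have "\<dots> = (\<Prod>a\<in>UNIV. u $ Abs_wo a - l $ Abs_wo a)"
    using lu' by (simp add: emeasure_lborel_box_eq ball_Basis_cart prod_Basis_cart of_wo_def prod_nonneg)
  also have "(\<Prod>a\<in>UNIV. u $ Abs_wo a - l $ Abs_wo a) = (\<Prod>i\<in>UNIV. u $ i - l $ i)"
  proof -
    have "inj (Abs_wo :: 'a \<Rightarrow> 'a wo)" by (metis Abs_wo_inverse UNIV_I injI)
    moreover have "range (Abs_wo :: 'a \<Rightarrow> 'a wo) = UNIV" by (metis Rep_wo_inverse surj_def)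
    ultimately show ?thesis using prod.reindex[of Abs_wo UNIV "\<lambda>i. u $ i - l $ i"] by simp
  qed
  also have "\<dots> = (\<Prod>b\<in>Basis. (u - l) \<bullet> b)"
    by (simp add: prod_Basis_cart)
  finally show "emeasure (distr lborel borel to_wo) (box l u) = (\<Prod>b\<in>Basis. (u - l) \<bullet> b)" .
qed simp

lemma nn_integral_of_wo:
  fixes F :: "real^'a::finite \<Rightarrow> ennreal"
  assumes [measurable]: "F \<in> borel_measurable borel"
  shows "(\<integral>\<^sup>+y. F (of_wo y) \<partial>lborel) = (\<integral>\<^sup>+x. F x \<partial>lborel)"
proof -
  have "(\<integral>\<^sup>+y. F (of_wo y) \<partial>lborel) = (\<integral>\<^sup>+y. F (of_wo y) \<partial>(distr lborel borel (to_wo :: real^'a \<Rightarrow> _)))"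
    by (simp add: lborel_to_wo)
  also have "\<dots> = (\<integral>\<^sup>+x. F (of_wo (to_wo x)) \<partial>lborel)"
    by (subst nn_integral_distr) auto
  finally show ?thesis by simp
qed

lemma cv_nn_wo:
  fixes g :: "real^'a::{finite,wellorder} \<Rightarrow> real^'a::_" and h :: "real^'a::_ \<Rightarrow> real"
  assumes S: "S \<in> sets lebesgue" and der: "\<And>x. x \<in> S \<Longrightarrow> (g has_derivative g' x) (at x within S)"
    and inj: "inj_on g S"
    and h0: "\<And>x. 0 \<le> h x" and meas: "(\<lambda>x. indicator (g`S) x * h x) \<in> borel_measurable borel"
    and fin: "(\<integral>\<^sup>+x. ennreal (indicator (g`S) x * h x) \<partial>lborel) < \<infinity>"
  shows "(\<integral>\<^sup>+x. ennreal (indicator (g`S) x * h x) \<partial>lborel)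
       = (\<integral>\<^sup>+x. ennreal (indicator S x * (\<bar>det (matrix (g' x))\<bar> * h (g x))) \<partial>lborel)"
proof -
  let ?F = "\<lambda>x. indicator (g`S) x * h x"
  have "integrable lborel ?F"
    using meas fin h0 by (intro integrableI_nonneg) auto
  then have "?F integrable_on UNIV"
    using has_integral_integral_lborel by blast
  moreover have "?F = (\<lambda>x. if x \<in> g`S then h x else 0)"
    by (auto simp: indicator_def)
  ultimately have hi: "h integrable_on g`S"
    using Henstock_Kurzweil_Integration.integrable_restrict_UNIV by metis
  define I where "I = integral (g`S) h"
  have habs: "h absolutely_integrable_on g`S"
    using hi h0 absolutely_integrable_on_iff_nonneg by blast
  have habs1: "(\<lambda>x. vec (h x) :: real^1) absolutely_integrable_on g`S"
    using habs by (simp add: absolutely_integrable_on_1_iff)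
  have int1: "integral (g`S) (\<lambda>x. vec (h x) :: real^1) = vec I"
    by (simp add: integral_on_1_eq I_def)
  have cv: "(\<lambda>x. \<bar>det (matrix (g' x))\<bar> *\<^sub>R (vec (h (g x)) :: real^1)) absolutely_integrable_on S \<and>
           integral S (\<lambda>x. \<bar>det (matrix (g' x))\<bar> *\<^sub>R (vec (h (g x)) :: real^1)) = vec I"
    using has_absolute_integral_change_of_variables[OF S der inj, of "\<lambda>x. vec (h x) :: real^1" "vec I"] habs1 int1 by blast
  have cv1: "(\<lambda>x. \<bar>det (matrix (g' x))\<bar> * h (g x)) absolutely_integrable_on S"
    using cv by (simp add: absolutely_integrable_on_1_iff)
  have cv2: "integral S (\<lambda>x. \<bar>det (matrix (g' x))\<bar> * h (g x)) = I"
    using cv by (simp add: integral_on_1_eq vec_eq_iff)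
  have "((\<lambda>x. \<bar>det (matrix (g' x))\<bar> * h (g x)) has_integral I) S"
    using cv1 cv2 by (metis absolutely_integrable_on_def has_integral_integral)
  then have r: "(\<integral>\<^sup>+x. ennreal (indicator S x * (\<bar>det (matrix (g' x))\<bar> * h (g x))) \<partial>lborel) = I"
    using h0 by (intro nn_integral_has_integral_lebesgue) auto
  have "(h has_integral I) (g`S)" using hi I_def by (simp add: has_integral_integral)
  then have l: "(\<integral>\<^sup>+x. ennreal (indicator (g`S) x * h x) \<partial>lborel) = I"
    using h0 by (intro nn_integral_has_integral_lebesgue) auto
  show ?thesis using l r by simp
qed

lemma matrix_conj_wo:
  fixes L :: "real^'a::finite \<Rightarrow> real^'a"
  assumes "linear L"
  shows "matrix (\<lambda>y. to_wo (L (of_wo y))) = (\<chi> i j. matrix L $ Rep_wo i $ Rep_wo j)"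
proof -
  have ax: "of_wo (axis j 1) = axis (Rep_wo j) 1" for j :: "'a wo"
  proof -
    have e: "Abs_wo a = j \<longleftrightarrow> a = Rep_wo j" for a by (metis Abs_wo_inverse Rep_wo_inverse UNIV_I)
    show ?thesis by (simp add: of_wo_def axis_def vec_eq_iff e)
  qed
  show ?thesis by (simp add: matrix_def vec_eq_iff ax to_wo_def)
qed

lemma det_conj_wo:
  fixes L :: "real^'a::finite \<Rightarrow> real^'a"
  assumes "linear L"
  shows "det (matrix (\<lambda>y. to_wo (L (of_wo y)))) = det (matrix L)"
proof -
  have inj: "inj (Abs_wo :: 'a \<Rightarrow> 'a wo)" by (metis Abs_wo_inverse UNIV_I injI)
  have rng: "range (Abs_wo :: 'a \<Rightarrow> 'a wo) = UNIV" by (metis Rep_wo_inverse surj_def)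
  have iv: "inv Abs_wo i = Rep_wo i" for i :: "'a wo"
    by (metis Rep_wo_inverse inj inv_f_f)
  show ?thesis
    using det_block_ext[OF inj, of "matrix L"] rng
    by (simp add: matrix_conj_wo[OF assms] iv)
qed

lemma cv_nn:
  fixes g :: "real^'a::finite \<Rightarrow> real^'a" and h :: "real^'a \<Rightarrow> real"
  assumes S: "S \<in> sets borel" and der: "\<And>x. x \<in> S \<Longrightarrow> (g has_derivative g' x) (at x within S)"
    and inj: "inj_on g S"
    and h0: "\<And>x. 0 \<le> h x"
    and meas1: "(\<lambda>x. indicator (g`S) x * h x) \<in> borel_measurable borel"
    and meas2: "(\<lambda>x. indicator S x * (\<bar>det (matrix (g' x))\<bar> * h (g x))) \<in> borel_measurable borel"
    and fin: "(\<integral>\<^sup>+x. ennreal (indicator (g`S) x * h x) \<partial>lborel) < \<infinity>"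
  shows "(\<integral>\<^sup>+x. ennreal (indicator (g`S) x * h x) \<partial>lborel)
       = (\<integral>\<^sup>+x. ennreal (indicator S x * (\<bar>det (matrix (g' x))\<bar> * h (g x))) \<partial>lborel)"
proof -
  define G where "G y = to_wo (g (of_wo y))" for y
  define G' where "G' y = (\<lambda>v. to_wo (g' (of_wo y) (of_wo v)))" for y
  define S' where "S' = of_wo -` S"
  define H where "H y = h (of_wo y)" for y
  have "S' \<in> sets borel" unfolding S'_def using measurable_sets_borel[OF meas_of_wo S] by simp
  then have S'l: "S' \<in> sets lebesgue" by (intro sets_completionI_sets) simp
  have img: "of_wo ` S' = S" unfolding S'_def by (metis surj_def to_of_wo of_to_wo surj_image_vimage_eq)
  have GS: "G ` S' = of_wo -` (g ` S)"
    unfolding G_def S'_def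
  proof (intro set_eqI iffI)
    fix x assume "x \<in> (\<lambda>y. to_wo (g (of_wo y))) ` (of_wo -` S)" then show "x \<in> of_wo -` g ` S" by auto
  next
    fix x assume "x \<in> of_wo -` g ` S"
    then obtain xb where xb: "xb \<in> S" "of_wo x = g xb" by auto
    then have "x = to_wo (g (of_wo (to_wo xb)))" by (metis of_to_wo to_of_wo)
    then show "x \<in> (\<lambda>y. to_wo (g (of_wo y))) ` (of_wo -` S)"
      using xb by (intro image_eqI[of _ _ "to_wo xb"]) auto
  qed
  have derG: "(G has_derivative G' y) (at y within S')" if "y \<in> S'" for y
  proof -
    have d1: "(of_wo has_derivative of_wo) (at y within S')"
      using linear_of_wo by (rule linear_imp_has_derivative)
    have d2: "(g has_derivative g' (of_wo y)) (at (of_wo y) within of_wo ` S')"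
      using der[of "of_wo y"] that img unfolding S'_def by simp
    have d3: "((\<lambda>y. g (of_wo y)) has_derivative (\<lambda>v. g' (of_wo y) (of_wo v))) (at y within S')"
      by (rule has_derivative_in_compose[OF d1 d2])
    have "bounded_linear to_wo" using linear_to_wo by (simp add: linear_conv_bounded_linear)
    from bounded_linear.has_derivative[OF this d3] show ?thesis
      unfolding G_def G'_def .
  qed
  have injG: "inj_on G S'"
    using inj unfolding G_def S'_def inj_on_def by (metis of_to_wo to_of_wo vimageE)
  have F1: "(\<lambda>y. indicator (G`S') y * H y) = (\<lambda>y. indicator (g`S) (of_wo y) * h (of_wo y))"
    unfolding GS H_def by (auto simp: indicator_def)
  have lin: "linear (g' x)" if "x \<in> S" for x
    using der[OF that] has_derivative_linear by blast
  have F2: "(\<lambda>y. indicator S' y * (\<bar>det (matrix (G' y))\<bar> * H (G y)))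
          = (\<lambda>y. indicator S (of_wo y) * (\<bar>det (matrix (g' (of_wo y)))\<bar> * h (g (of_wo y))))"
  proof
    fix y show "indicator S' y * (\<bar>det (matrix (G' y))\<bar> * H (G y))
          = indicator S (of_wo y) * (\<bar>det (matrix (g' (of_wo y)))\<bar> * h (g (of_wo y)))"
    proof (cases "of_wo y \<in> S")
      case True
      then show ?thesis
        unfolding S'_def G'_def H_def G_def using det_conj_wo[OF lin[OF True]] by simp
    qed (simp add: S'_def)
  qed
  have i1: "(\<integral>\<^sup>+y. ennreal (indicator (G`S') y * H y) \<partial>lborel) = (\<integral>\<^sup>+x. ennreal (indicator (g`S) x * h x) \<partial>lborel)"
  proof -
    have "(\<integral>\<^sup>+y. ennreal (indicator (G`S') y * H y) \<partial>lborel) = (\<integral>\<^sup>+y. ennreal (indicator (g`S) (of_wo y) * h (of_wo y)) \<partial>lborel)"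
      using F1 by (simp add: fun_eq_iff)
    also have "\<dots> = (\<integral>\<^sup>+x. ennreal (indicator (g`S) x * h x) \<partial>lborel)"
      using nn_integral_of_wo[of "\<lambda>x. ennreal (indicator (g`S) x * h x)"] meas1 by simp
    finally show ?thesis .
  qed
  have i2: "(\<integral>\<^sup>+y. ennreal (indicator S' y * (\<bar>det (matrix (G' y))\<bar> * H (G y))) \<partial>lborel)
      = (\<integral>\<^sup>+x. ennreal (indicator S x * (\<bar>det (matrix (g' x))\<bar> * h (g x))) \<partial>lborel)"
  proof -
    have "(\<integral>\<^sup>+y. ennreal (indicator S' y * (\<bar>det (matrix (G' y))\<bar> * H (G y))) \<partial>lborel)
       = (\<integral>\<^sup>+y. ennreal (indicator S (of_wo y) * (\<bar>det (matrix (g' (of_wo y)))\<bar> * h (g (of_wo y)))) \<partial>lborel)"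
      using F2 by (simp add: fun_eq_iff)
    also have "\<dots> = (\<integral>\<^sup>+x. ennreal (indicator S x * (\<bar>det (matrix (g' x))\<bar> * h (g x))) \<partial>lborel)"
      using nn_integral_of_wo[of "\<lambda>x. ennreal (indicator S x * (\<bar>det (matrix (g' x))\<bar> * h (g x)))"] meas2 by simp
    finally show ?thesis .
  qed
  have m1: "(\<lambda>y. indicator (G`S') y * H y) \<in> borel_measurable borel"
    unfolding F1 using meas1 by measurable
  have "(\<integral>\<^sup>+y. ennreal (indicator (G`S') y * H y) \<partial>lborel)
      = (\<integral>\<^sup>+y. ennreal (indicator S' y * (\<bar>det (matrix (G' y))\<bar> * H (G y))) \<partial>lborel)"
    using cv_nn_wo[OF S'l derG injG, of H] h0 m1 fin i1 unfolding H_def by simp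
  then show ?thesis using i1 i2 by simp
qed

lemma main_join: "inj e \<Longrightarrow> main_coords e (join_coords e z y) = z"
  by (simp add: main_coords_def join_coords_def vec_eq_iff)
lemma join_main: "join_coords e (main_coords e y) y = y"
  by (simp add: main_coords_def join_coords_def vec_eq_iff f_inv_into_f)
lemma join_join: "join_coords e z (join_coords e z' y) = join_coords e z y"
  by (simp add: join_coords_def vec_eq_iff)
lemma aux_join: "aux_dens f e (join_coords e z y) = aux_dens f e y"
  by (simp add: aux_dens_def join_coords_def)

lemma prod_dens_split:
  fixes e :: "'n::finite \<Rightarrow> 'm::finite"
  assumes "inj e"
  shows "prod_dens f y = prod_dens f (main_coords e y) * aux_dens f e y"
proof -
  have "prod_dens f y = (\<Prod>i\<in>range e. f (y $ i)) * aux_dens f e y"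
    unfolding prod_dens_def aux_dens_def
    by (subst prod.subset_diff[of "range e"]) (auto simp: mult.commute)
  also have "(\<Prod>i\<in>range e. f (y $ i)) = (\<Prod>a\<in>UNIV. f (y $ e a))"
    using assms by (simp add: prod.reindex)
  finally show ?thesis by (simp add: prod_dens_def main_coords_def)
qed

lemma linear_main: "linear (main_coords e)"
  by (auto simp: linear_iff main_coords_def vec_eq_iff)

definition jz :: "('n \<Rightarrow> 'm) \<Rightarrow> real^'n \<Rightarrow> real^'m" where
  "jz e z = (\<chi> i. if i \<in> range e then z $ inv e i else 0)"
definition jy :: "('n \<Rightarrow> 'm) \<Rightarrow> real^'m \<Rightarrow> real^'m" where
  "jy e y = (\<chi> i. if i \<in> range e then 0 else y $ i)"

lemma join_split: "join_coords e z y = jz e z + jy e y"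
  by (simp add: join_coords_def jz_def jy_def vec_eq_iff)

lemma linear_jz: "linear (jz e)"
  by (auto simp: linear_iff jz_def vec_eq_iff)
lemma linear_jy: "linear (jy e)"
  by (auto simp: linear_iff jy_def vec_eq_iff)

lemma abs_jac_compose:
  fixes f g :: "real^'n::finite \<Rightarrow> real^'n"
  assumes g: "g differentiable (at x)" and f: "f differentiable (at (g x))"
  shows "abs_jac (\<lambda>y. f (g y)) x = abs_jac f (g x) * abs_jac g x"
proof -
  have dg: "(g has_derivative frechet_derivative g (at x)) (at x)" using g frechet_derivative_works by blast
  have df: "(f has_derivative frechet_derivative f (at (g x))) (at (g x))" using f frechet_derivative_works by blast
  have "((\<lambda>y. f (g y)) has_derivative (\<lambda>v. frechet_derivative f (at (g x)) (frechet_derivative g (at x) v))) (at x)"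
    by (rule has_derivative_compose[OF dg df])
  then have "(\<lambda>v. frechet_derivative f (at (g x)) (frechet_derivative g (at x) v)) = frechet_derivative (\<lambda>y. f (g y)) (at x)"
    by (rule frechet_derivative_at)
  then have fd: "frechet_derivative (\<lambda>y. f (g y)) (at x) = frechet_derivative f (at (g x)) \<circ> frechet_derivative g (at x)"
    by (simp add: comp_def)
  have lg: "linear (frechet_derivative g (at x))" using dg has_derivative_linear by blast
  have lf: "linear (frechet_derivative f (at (g x)))" using df has_derivative_linear by blast
  have "matrix (frechet_derivative f (at (g x)) \<circ> frechet_derivative g (at x)) = matrix (frechet_derivative f (at (g x))) ** matrix (frechet_derivative g (at x))"
    by (rule matrix_compose[OF lg lf])
  then show ?thesis unfolding abs_jac_def fd by (simp add: det_mul abs_mult)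
qed

lemma differentiable_compose_at:
  "g differentiable (at x) \<Longrightarrow> f differentiable (at (g x)) \<Longrightarrow> (\<lambda>y. f (g y)) differentiable (at x)"
  using differentiable_chain_at[of g x f] by (simp add: comp_def)

lemma diffeo_inv_jac:
  fixes T :: "real^'n::finite \<Rightarrow> real^'n"
  assumes d: "diffeo_between U V T" and x: "x \<in> U"
  shows "abs_jac (the_inv_into U T) (T x) * abs_jac T x = 1"
proof -
  have oU: "open U" and bij: "bij_betw T U V" and dT: "T differentiable (at x)"
    and dTi: "the_inv_into U T differentiable (at (T x))"
    using d x unfolding diffeo_between_def by (auto simp: bij_betw_def)
  have inj: "inj_on T U" using bij bij_betw_def by blast
  have "(\<lambda>y. the_inv_into U T (T y)) differentiable (at x)"
    using differentiable_compose_at[OF dT dTi] .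
  then have h1: "((\<lambda>y. the_inv_into U T (T y)) has_derivative frechet_derivative (\<lambda>y. the_inv_into U T (T y)) (at x)) (at x)"
    using frechet_derivative_works by blast
  have "((\<lambda>y. y) has_derivative frechet_derivative (\<lambda>y. the_inv_into U T (T y)) (at x)) (at x)"
    by (rule has_derivative_transform_within_open[OF h1 oU x]) (simp add: the_inv_into_f_f[OF inj])
  moreover have "((\<lambda>y. y) has_derivative (\<lambda>y. y)) (at x)" by (rule has_derivative_ident)
  ultimately have "frechet_derivative (\<lambda>y. the_inv_into U T (T y)) (at x) = (\<lambda>y. y)"
    using has_derivative_unique by blast
  then have "abs_jac (\<lambda>y. the_inv_into U T (T y)) x = 1"
    by (simp add: abs_jac_def matrix_id_mat_1[unfolded id_def])
  then show ?thesis using abs_jac_compose[OF dT dTi] by simp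
qed

lemma block_jac:
  fixes F :: "real^'n::finite \<Rightarrow> real^'n" and e :: "'n \<Rightarrow> 'm::finite"
  assumes e: "inj e" and dF: "F differentiable (at (main_coords e y))"
  shows "abs_jac (\<lambda>y. join_coords e (F (main_coords e y)) y) y = abs_jac F (main_coords e y)"
    and "(\<lambda>y. join_coords e (F (main_coords e y)) y) differentiable (at y)"
proof -
  let ?D = "frechet_derivative F (at (main_coords e y))"
  have hF: "(F has_derivative ?D) (at (main_coords e y))" using dF frechet_derivative_works by blast
  have lD: "linear ?D" using hF has_derivative_linear by blast
  have hm: "(main_coords e has_derivative main_coords e) (at y)"
    using linear_main by (rule linear_imp_has_derivative)
  have h1: "((\<lambda>y. F (main_coords e y)) has_derivative (\<lambda>v. ?D (main_coords e v))) (at y)"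
    by (rule has_derivative_compose[OF hm hF])
  have h2: "((\<lambda>y. jz e (F (main_coords e y))) has_derivative (\<lambda>v. jz e (?D (main_coords e v)))) (at y)"
  proof -
    have bl: "bounded_linear (jz e)" using linear_jz[of e] by (simp add: linear_conv_bounded_linear)
    show ?thesis by (rule bounded_linear.has_derivative[OF bl h1])
  qed
  have h3: "(jy e has_derivative jy e) (at y)" using linear_jy by (rule linear_imp_has_derivative)
  have h: "((\<lambda>y. join_coords e (F (main_coords e y)) y) has_derivative (\<lambda>v. jz e (?D (main_coords e v)) + jy e v)) (at y)"
    unfolding join_split using has_derivative_add[OF h2 h3] .
  then show "(\<lambda>y. join_coords e (F (main_coords e y)) y) differentiable (at y)"
    unfolding differentiable_def by blast
  have fd: "frechet_derivative (\<lambda>y. join_coords e (F (main_coords e y)) y) (at y) = (\<lambda>v. jz e (?D (main_coords e v)) + jy e v)"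
    using frechet_derivative_at[OF h] by simp
  have mainax: "main_coords e (axis j 1) = (if j \<in> range e then axis (inv e j) 1 else 0)" for j
  proof (cases "j \<in> range e")
    case True
    then obtain b where b: "j = e b" by auto
    have "\<And>a. e a = e b \<longleftrightarrow> a = b" using e by (auto simp: inj_eq)
    then show ?thesis using b e by (simp add: main_coords_def axis_def vec_eq_iff)
  next
    case False
    then have "\<And>a. e a \<noteq> j" by auto
    then show ?thesis using False by (simp add: main_coords_def axis_def vec_eq_iff)
  qed
  have D0: "?D 0 = 0" using lD linear_0 by blast
  have mat: "matrix (\<lambda>v. jz e (?D (main_coords e v)) + jy e v)
     = (\<chi> i j. if i \<in> range e then (if j \<in> range e then matrix ?D $ inv e i $ inv e j else 0)
                    else (if i = j then 1 else 0))"
    by (simp add: matrix_def vec_eq_iff jz_def jy_def mainax D0) (simp add: axis_def)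
  show "abs_jac (\<lambda>y. join_coords e (F (main_coords e y)) y) y = abs_jac F (main_coords e y)"
    unfolding abs_jac_def fd mat det_block_ext[OF e] ..
qed

lemma AE_transfer:
  fixes f finv :: "real^'a::finite \<Rightarrow> real^'a"
  assumes fW: "\<And>x. x \<in> W \<Longrightarrow> f x \<in> W'" and inv: "\<And>x. x \<in> W \<Longrightarrow> finv (f x) = x"
    and d: "finv differentiable_on W'" and ae: "AE z in lborel. P z"
  shows "AE x in lborel. x \<in> W \<longrightarrow> P (f x)"
proof -
  from ae obtain N where N: "{z \<in> space lborel. \<not> P z} \<subseteq> N" "N \<in> null_sets lborel"
    using ae unfolding eventually_ae_filter by auto
  have "negligible N" using N(2) by (simp add: negligible_iff_null_sets null_sets_completionI)
  then have "negligible (N \<inter> W')" by (rule negligible_subset) auto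
  then have "negligible (finv ` (N \<inter> W'))" using d
    by (intro negligible_differentiable_image_negligible) (auto intro: differentiable_on_subset)
  then have nl: "finv ` (N \<inter> W') \<in> null_sets lebesgue" by (simp add: negligible_iff_null_sets)
  have "{x \<in> space lebesgue. \<not> (x \<in> W \<longrightarrow> P (f x))} \<subseteq> finv ` (N \<inter> W')"
  proof
    fix x assume "x \<in> {x \<in> space lebesgue. \<not> (x \<in> W \<longrightarrow> P (f x))}"
    then have x: "x \<in> W" "\<not> P (f x)" by auto
    then have "f x \<in> N \<inter> W'" using N(1) fW by auto
    then show "x \<in> finv ` (N \<inter> W')" using inv[OF x(1)] by (metis image_eqI)
  qed
  then have "AE x in lebesgue. x \<in> W \<longrightarrow> P (f x)" using nl by (intro AE_I') 
  then show ?thesis by (simp add: AE_completion_iff)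
qed

lemma main_meas[measurable]: "main_coords e \<in> borel_measurable borel"
  by (rule borel_measurable_continuous_onI) (unfold main_coords_def, intro continuous_intros)

lemma AE_main:
  fixes e :: "'n::finite \<Rightarrow> 'm::finite"
  assumes e: "inj e" and ae: "AE \<theta> in lborel. P \<theta>"
  shows "AE y in (lborel :: (real^'m) measure). P (main_coords e y)"
proof -
  from ae obtain N where N: "{z \<in> space lborel. \<not> P z} \<subseteq> N" "N \<in> null_sets lborel"
    using ae unfolding eventually_ae_filter by auto
  define A where "A = main_coords e -` N"
  have Ab: "A \<in> sets borel" unfolding A_def using measurable_sets_borel[OF main_meas, of N e] null_setsD2[OF N(2)] by simp
  define \<Psi> :: "(real^'n) \<times> (real^'m) \<Rightarrow> (real^'m) \<times> (real^'n)"
    where "\<Psi> = (\<lambda>(t, v). (join_coords e t v, main_coords e v))"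
  have lin: "linear \<Psi>"
    unfolding \<Psi>_def linear_iff using linear_jz[of e] linear_jy[of e] linear_main[of e]
    by (auto simp: join_split linear_add linear_scale algebra_simps scaleR_prod_def)
  have img: "\<Psi> ` (N \<times> UNIV) = A \<times> (UNIV :: (real^'n) set)"
  proof (intro set_eqI iffI)
    fix z :: "(real^'m) \<times> (real^'n)" assume "z \<in> \<Psi> ` (N \<times> UNIV)"
    then show "z \<in> A \<times> UNIV" unfolding \<Psi>_def A_def by (auto simp: main_join[OF e])
  next
    fix z :: "(real^'m) \<times> (real^'n)" assume z: "z \<in> A \<times> UNIV"
    obtain y :: "real^'m" and w :: "real^'n" where yw: "z = (y, w)" by (cases z)
    have "\<Psi> (main_coords e y, join_coords e w y) = (y, w)"
      unfolding \<Psi>_def by (simp add: join_join join_main main_join[OF e])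
    moreover have "(main_coords e y, join_coords e w y) \<in> N \<times> UNIV" using z yw by (simp add: A_def)
    ultimately show "z \<in> \<Psi> ` (N \<times> UNIV)" using yw by (metis image_eqI)
  qed
  have "N \<times> UNIV \<in> null_sets (lborel \<Otimes>\<^sub>M (lborel :: (real^'m) measure))"
    using N(2) by (intro lborel.times_in_null_sets1) auto
  then have "N \<times> UNIV \<in> null_sets (lborel :: ((real^'n) \<times> (real^'m)) measure)"
    by (simp add: lborel_prod)
  then have "negligible (N \<times> (UNIV :: (real^'m) set))"
    by (simp add: negligible_iff_null_sets null_sets_completionI)
  then have "negligible (\<Psi> ` (N \<times> UNIV))"
    using lin by (intro negligible_differentiable_image_negligible linear_imp_differentiable_on) auto
  then have "A \<times> (UNIV :: (real^'n) set) \<in> null_sets lebesgue"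
    by (simp add: img negligible_iff_null_sets)
  moreover have "A \<times> (UNIV :: (real^'n) set) \<in> sets lborel"
    using Ab by (simp add: borel_prod[symmetric])
  ultimately have "A \<times> (UNIV :: (real^'n) set) \<in> null_sets (lborel :: ((real^'m) \<times> (real^'n)) measure)"
    using null_sets_completion_iff by blast
  then have "A \<times> (UNIV :: (real^'n) set) \<in> null_sets (lborel \<Otimes>\<^sub>M lborel)"
    by (simp add: lborel_prod)
  then have "emeasure (lborel \<Otimes>\<^sub>M lborel) (A \<times> (UNIV :: (real^'n) set)) = 0"
    by (rule null_setsD1)
  moreover have "emeasure (lborel \<Otimes>\<^sub>M lborel) (A \<times> (UNIV :: (real^'n) set)) = emeasure lborel A * emeasure lborel (UNIV :: (real^'n) set)"
    using Ab by (intro lborel.emeasure_pair_measure_Times) auto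
  ultimately have "emeasure lborel A * \<top> = 0" by simp
  then have "emeasure lborel A = 0" by (metis mult_eq_0_iff ennreal_top_neq_zero)
  then have An: "A \<in> null_sets lborel" using Ab by (simp add: null_sets_def)
  show ?thesis
    by (rule AE_I'[OF An]) (use N(1) in \<open>auto simp: A_def\<close>)
qed

lemma continuous_on_det:
  fixes M :: "'x::topological_space \<Rightarrow> real^'n::finite^'n"
  assumes "continuous_on S M"
  shows "continuous_on S (\<lambda>x. det (M x))"
  unfolding det_def using assms by (intro continuous_intros)

lemma dens_supp:
  fixes f :: "real^'a::finite \<Rightarrow> real^'a" and g h :: "real^'a \<Rightarrow> real"
  assumes fm[measurable]: "f \<in> borel_measurable borel"
    and gm[measurable]: "g \<in> borel_measurable borel" and hm[measurable]: "h \<in> borel_measurable borel"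
    and h0: "\<And>x. 0 \<le> h x"
    and gW: "\<And>x. x \<notin> W \<Longrightarrow> g x = 0" and fW: "\<And>x. x \<in> W \<Longrightarrow> f x \<in> W'"
    and W'b[measurable]: "W' \<in> sets borel"
    and push: "distr (density lborel (\<lambda>x. ennreal (g x))) lborel f = density lborel (\<lambda>x. ennreal (h x))"
  shows "AE z in lborel. z \<notin> W' \<longrightarrow> h z = 0"
proof -
  have "emeasure (density lborel (\<lambda>x. ennreal (h x))) (- W')
      = emeasure (distr (density lborel (\<lambda>x. ennreal (g x))) lborel f) (- W')"
    by (simp add: push)
  also have "\<dots> = emeasure (density lborel (\<lambda>x. ennreal (g x))) (f -` (- W'))"
    by (subst emeasure_distr) auto
  also have "\<dots> = (\<integral>\<^sup>+ x. ennreal (g x) * indicator (f -` (- W')) x \<partial>lborel)"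
    using measurable_sets_borel[OF fm, of "-W'"] W'b by (subst emeasure_density) auto
  also have "\<dots> = (\<integral>\<^sup>+ x. 0 \<partial>(lborel :: (real^'a) measure))"
  proof (rule nn_integral_cong)
    fix x show "ennreal (g x) * indicator (f -` (- W')) x = 0"
    proof (cases "f x \<in> W'")
      case False
      then have "x \<notin> W" using fW by blast
      then show ?thesis by (simp add: gW)
    qed simp
  qed
  finally have "(\<integral>\<^sup>+ x. ennreal (h x) * indicator (- W') x \<partial>lborel) = 0"
    by (subst (asm) emeasure_density) auto
  then have "AE x in lborel. ennreal (h x) * indicator (- W') x = 0"
    by (subst (asm) nn_integral_0_iff_AE) auto
  then show ?thesis
  proof eventually_elim
    case (elim z)
    show ?case
    proof
      assume "z \<notin> W'"
      then have "ennreal (h z) = 0" using elim by simp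
      then show "h z = 0" using h0[of z] by (simp add: ennreal_eq_0_iff)
    qed
  qed
qed

lemma dens_push:
  fixes f :: "real^'a::finite \<Rightarrow> real^'a" and g h :: "real^'a \<Rightarrow> real"
  assumes df: "diffeo_between W W' f" and fm[measurable]: "f \<in> borel_measurable borel"
    and gm[measurable]: "g \<in> borel_measurable borel" and hm[measurable]: "h \<in> borel_measurable borel"
    and g0: "\<And>x. 0 \<le> g x" and h0: "\<And>x. 0 \<le> h x" and gW: "\<And>x. x \<notin> W \<Longrightarrow> g x = 0"
    and gfin: "(\<integral>\<^sup>+x. ennreal (g x) \<partial>lborel) < \<infinity>"
    and push: "distr (density lborel (\<lambda>x. ennreal (g x))) lborel f = density lborel (\<lambda>x. ennreal (h x))"
  shows "AE x in lborel. x \<in> W \<longrightarrow> g x = h (f x) * abs_jac f x"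
proof -
  have dfs: "open W \<and> open W' \<and> bij_betw f W W' \<and>
     (\<forall>x\<in>W. f differentiable (at x)) \<and>
     continuous_on W (\<lambda>x. matrix (frechet_derivative f (at x))) \<and>
     (\<forall>y\<in>W'. the_inv_into W f differentiable (at y))"
    using df unfolding diffeo_between_def by blast
  then have oW: "open W" and oW': "open W'" and bij: "bij_betw f W W'"
    and dfx: "\<And>x. x \<in> W \<Longrightarrow> f differentiable (at x)"
    and cm: "continuous_on W (\<lambda>x. matrix (frechet_derivative f (at x)))"
    and dfi: "\<And>y. y \<in> W' \<Longrightarrow> the_inv_into W f differentiable (at y)"
    by blast+
  define finv where "finv = the_inv_into W f"
  have inj: "inj_on f W" using bij by (simp add: bij_betw_def)
  have fW: "f ` W = W'" using bij by (simp add: bij_betw_def)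
  have Wb[measurable]: "W \<in> sets borel" using oW by simp
  have W'b[measurable]: "W' \<in> sets borel" using oW' by simp
  have cJ: "continuous_on W (abs_jac f)"
    unfolding abs_jac_def by (rule continuous_on_rabs[OF continuous_on_det[OF cm]])
  have Jm: "(\<lambda>x. indicator W x *\<^sub>R abs_jac f x) \<in> borel_measurable borel"
    by (rule borel_measurable_continuous_on_indicator[OF Wb cJ])
  define F2 where "F2 x = indicator W x * (h (f x) * abs_jac f x)" for x
  have F2eq: "F2 = (\<lambda>x. (indicator W x *\<^sub>R abs_jac f x) * h (f x))"
    by (auto simp: F2_def fun_eq_iff)
  have F2m[measurable]: "F2 \<in> borel_measurable borel"
    unfolding F2eq using Jm by measurable
  have cfinv: "continuous_on W' finv"
    unfolding finv_def using dfi
    by (intro continuous_at_imp_continuous_on ballI differentiable_imp_continuous_within) auto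
  have key: "(\<integral>\<^sup>+x\<in>A. ennreal (g x) \<partial>lborel) = (\<integral>\<^sup>+x\<in>A. ennreal (F2 x) \<partial>lborel)"
    if A: "A \<in> sets lborel" for A
  proof -
    have Ab[measurable]: "A \<in> sets borel" using A by simp
    define B where "B = A \<inter> W"
    have Bb[measurable]: "B \<in> sets borel" unfolding B_def by simp
    define C where "C = f ` B"
    have Ceq: "C = {z \<in> W'. finv z \<in> B}"
    proof (intro set_eqI iffI)
      fix z assume "z \<in> C"
      then obtain x where x: "x \<in> B" "z = f x" unfolding C_def by auto
      then have "x \<in> W" unfolding B_def by auto
      then show "z \<in> {z \<in> W'. finv z \<in> B}" using x fW inj unfolding finv_def
        by (auto simp: the_inv_into_f_f)
    next
      fix z assume z: "z \<in> {z \<in> W'. finv z \<in> B}"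
      then have "f (finv z) = z" unfolding finv_def using fW by (auto intro: f_the_inv_into_f[OF inj])
      then show "z \<in> C" using z unfolding C_def by (metis (no_types, lifting) image_eqI mem_Collect_eq)
    qed
    have Cb[measurable]: "C \<in> sets borel"
    proof -
      have "finv \<in> borel_measurable (restrict_space borel W')"
        by (rule borel_measurable_continuous_on_restrict[OF cfinv])
      then have "finv -` B \<inter> space (restrict_space borel W') \<in> sets (restrict_space borel W')"
        by (rule measurable_sets) simp
      then have "finv -` B \<inter> W' \<in> sets borel"
        by (simp add: sets_restrict_space_iff)
      moreover have "finv -` B \<inter> W' = C" using Ceq by auto
      ultimately show ?thesis by simp
    qed
    have pre: "f -` C \<inter> W = B"
      unfolding C_def B_def using inj by (auto simp: inj_on_def)
    have fCb[measurable]: "f -` C \<in> sets borel" using measurable_sets_borel[OF fm Cb] .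
    have e1: "(\<integral>\<^sup>+x\<in>A. ennreal (g x) \<partial>lborel) = emeasure (density lborel (\<lambda>x. ennreal (g x))) (f -` C)"
    proof -
      have "emeasure (density lborel (\<lambda>x. ennreal (g x))) (f -` C) = (\<integral>\<^sup>+x. ennreal (g x) * indicator (f -` C) x \<partial>lborel)"
        by (subst emeasure_density) auto
      also have "\<dots> = (\<integral>\<^sup>+x\<in>A. ennreal (g x) \<partial>lborel)"
      proof (intro nn_integral_cong)
        fix x show "ennreal (g x) * indicator (f -` C) x = ennreal (g x) * indicator A x"
        proof (cases "x \<in> W")
          case True
          then have "x \<in> f -` C \<longleftrightarrow> x \<in> A" using pre unfolding B_def by auto
          then show ?thesis by (simp add: indicator_def)
        qed (simp add: gW)
      qed
      finally show ?thesis by simp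
    qed
    have e2: "emeasure (density lborel (\<lambda>x. ennreal (g x))) (f -` C) = emeasure (density lborel (\<lambda>x. ennreal (h x))) C"
    proof -
      have "emeasure (density lborel (\<lambda>x. ennreal (h x))) C = emeasure (distr (density lborel (\<lambda>x. ennreal (g x))) lborel f) C"
        by (simp add: push)
      also have "\<dots> = emeasure (density lborel (\<lambda>x. ennreal (g x))) (f -` C)"
        by (subst emeasure_distr) auto
      finally show ?thesis by simp
    qed
    have e3: "emeasure (density lborel (\<lambda>x. ennreal (h x))) C = (\<integral>\<^sup>+x. ennreal (indicator C x * h x) \<partial>lborel)"
      by (subst emeasure_density) (auto intro!: nn_integral_cong simp: indicator_def)
    have fin: "(\<integral>\<^sup>+x. ennreal (indicator (f ` B) x * h x) \<partial>lborel) < \<infinity>"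
    proof -
      have "(\<integral>\<^sup>+x. ennreal (indicator (f ` B) x * h x) \<partial>lborel) = emeasure (density lborel (\<lambda>x. ennreal (g x))) (f -` C)"
        using e2 e3 C_def by simp
      also have "\<dots> = (\<integral>\<^sup>+x. ennreal (g x) * indicator (f -` C) x \<partial>lborel)"
        by (subst emeasure_density) auto
      also have "\<dots> \<le> (\<integral>\<^sup>+x. ennreal (g x) \<partial>lborel)"
        by (intro nn_integral_mono) (auto simp: indicator_def)
      finally show ?thesis using gfin by (simp add: order_le_less_trans)
    qed
    have der: "(f has_derivative frechet_derivative f (at x)) (at x within B)" if "x \<in> B" for x
    proof -
      have "x \<in> W" using that unfolding B_def by auto
      then have "f differentiable (at x)" by (rule dfx)
      then have "(f has_derivative frechet_derivative f (at x)) (at x)" using frechet_derivative_works by blast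
      then show ?thesis by (rule has_derivative_at_withinI)
    qed
    have injB: "inj_on f B" using inj unfolding B_def by (rule inj_on_subset) auto
    have m1: "(\<lambda>x. indicator (f ` B) x * h x) \<in> borel_measurable borel"
      using Cb unfolding C_def by measurable
    have m2eq: "(\<lambda>x. indicator B x * (\<bar>det (matrix (frechet_derivative f (at x)))\<bar> * h (f x))) = (\<lambda>x. indicator A x * F2 x)"
      by (auto simp: fun_eq_iff F2_def B_def abs_jac_def indicator_def)
    have m2: "(\<lambda>x. indicator B x * (\<bar>det (matrix (frechet_derivative f (at x)))\<bar> * h (f x))) \<in> borel_measurable borel"
      unfolding m2eq by measurable
    have cv: "(\<integral>\<^sup>+x. ennreal (indicator (f ` B) x * h x) \<partial>lborel)
        = (\<integral>\<^sup>+x. ennreal (indicator B x * (\<bar>det (matrix (frechet_derivative f (at x)))\<bar> * h (f x))) \<partial>lborel)"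
      by (rule cv_nn[OF Bb der injB h0 m1 m2 fin])
    have e4: "(\<integral>\<^sup>+x\<in>A. ennreal (F2 x) \<partial>lborel)
       = (\<integral>\<^sup>+x. ennreal (indicator B x * (\<bar>det (matrix (frechet_derivative f (at x)))\<bar> * h (f x))) \<partial>lborel)"
    proof (rule nn_integral_cong)
      fix x
      have "indicator B x * (\<bar>det (matrix (frechet_derivative f (at x)))\<bar> * h (f x)) = indicator A x * F2 x"
        using fun_cong[OF m2eq, of x] by simp
      then show "ennreal (F2 x) * indicator A x = ennreal (indicator B x * (\<bar>det (matrix (frechet_derivative f (at x)))\<bar> * h (f x)))"
        by (simp add: indicator_def)
    qed
    show ?thesis using e1 e2 e3 cv e4 C_def by simp
  qed
  have "AE x in lborel. ennreal (g x) = ennreal (F2 x)"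
    by (rule sigma_finite_measure.density_unique2[OF sigma_finite_lborel]) (auto simp: key)
  then show ?thesis
  proof eventually_elim
    case (elim x)
    have "F2 x \<ge> 0" unfolding F2_def using h0 by (auto simp: abs_jac_def)
    then have "g x = F2 x" using elim g0 by simp
    then show ?case by (simp add: F2_def)
  qed
qed

lemma diffeo_facts:
  fixes T :: "real^'a::finite \<Rightarrow> real^'a"
  assumes d: "diffeo_between U V T"
  shows "open U" "open V" "\<And>x. x \<in> U \<Longrightarrow> T x \<in> V"
    "\<And>y. y \<in> V \<Longrightarrow> the_inv_into U T y \<in> U"
    "\<And>x. x \<in> U \<Longrightarrow> the_inv_into U T (T x) = x"
    "\<And>y. y \<in> V \<Longrightarrow> T (the_inv_into U T y) = y"
    "\<And>x. x \<in> U \<Longrightarrow> T differentiable (at x)"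
    "\<And>y. y \<in> V \<Longrightarrow> the_inv_into U T differentiable (at y)"
proof -
  have dfs: "open U \<and> open V \<and> bij_betw T U V \<and>
     (\<forall>x\<in>U. T differentiable (at x)) \<and>
     (\<forall>y\<in>V. the_inv_into U T differentiable (at y))"
    using d unfolding diffeo_between_def by blast
  then have inj: "inj_on T U" and img: "T ` U = V" by (auto simp: bij_betw_def)
  show "open U" "open V" using dfs by blast+
  show "\<And>x. x \<in> U \<Longrightarrow> T differentiable (at x)" "\<And>y. y \<in> V \<Longrightarrow> the_inv_into U T differentiable (at y)"
    using dfs by blast+
  show "\<And>x. x \<in> U \<Longrightarrow> T x \<in> V" using img by blast
  show "\<And>y. y \<in> V \<Longrightarrow> the_inv_into U T y \<in> U" using inj img by (metis the_inv_into_into subset_refl)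
  show "\<And>x. x \<in> U \<Longrightarrow> the_inv_into U T (T x) = x" using inj by (rule the_inv_into_f_f)
  show "\<And>y. y \<in> V \<Longrightarrow> T (the_inv_into U T y) = y" using inj img by (metis f_the_inv_into_f)
qed

lemma mass_push:
  assumes [measurable]: "f \<in> borel_measurable borel" "g \<in> borel_measurable borel" "h \<in> borel_measurable borel"
    and push: "distr (density lborel (\<lambda>x. ennreal (g x))) lborel f = density lborel (\<lambda>x. ennreal (h x))"
  shows "(\<integral>\<^sup>+x. ennreal (h x) \<partial>lborel) = (\<integral>\<^sup>+x. ennreal (g x) \<partial>lborel)"
proof -
  have "(\<integral>\<^sup>+x. ennreal (h x) \<partial>lborel) = emeasure (density lborel (\<lambda>x. ennreal (h x))) UNIV"
    by (subst emeasure_density) auto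
  also have "\<dots> = emeasure (distr (density lborel (\<lambda>x. ennreal (g x))) lborel f) UNIV"
    by (simp add: push)
  also have "\<dots> = emeasure (density lborel (\<lambda>x. ennreal (g x))) UNIV"
    by (subst emeasure_distr) auto
  also have "\<dots> = (\<integral>\<^sup>+x. ennreal (g x) \<partial>lborel)"
    by (subst emeasure_density) auto
  finally show ?thesis .
qed

lemma prod_dens_meas[measurable]:
  assumes [measurable]: "nu \<in> borel_measurable borel"
  shows "(prod_dens nu :: real^'a::finite \<Rightarrow> real) \<in> borel_measurable borel"
  unfolding prod_dens_def by measurable

lemma aux_dens_meas[measurable]:
  assumes [measurable]: "nu \<in> borel_measurable borel"
  shows "(aux_dens nu e :: real^'m::finite \<Rightarrow> real) \<in> borel_measurable borel"
  unfolding aux_dens_def by measurable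

lemma rj_fwd:
  assumes "pp' * Jc = pp * gf" "pp * gf > 0"
  shows "rj_accept (Pk * pp) (Pk' * pp') jf jr gf 1 Jc = min 1 (Pk' / Pk * (jr / jf))"
proof -
  have "(Pk' * pp' * jr * 1) / (Pk * pp * jf * gf) * Jc = (Pk' * jr * (pp' * Jc)) / (Pk * jf * (pp * gf))"
    by (simp add: field_simps)
  also have "\<dots> = (Pk' * jr * (pp * gf)) / (Pk * jf * (pp * gf))" by (simp only: assms(1))
  also have "\<dots> = (Pk' * jr) / (Pk * jf)" using assms(2) by (intro mult_divide_mult_cancel_right) auto
  also have "\<dots> = Pk' / Pk * (jr / jf)" by simp
  finally show ?thesis by (simp add: rj_accept_def)
qed

lemma rj_rev:
  assumes "pp * ga * Jc = pp'" "pp' > 0"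
  shows "rj_accept (Pk' * pp') (Pk * pp) jf jr 1 ga Jc = min 1 (Pk / Pk' * (jr / jf))"
proof -
  have "(Pk * pp * jr * ga) / (Pk' * pp' * jf * 1) * Jc = (Pk * jr * (pp * ga * Jc)) / (Pk' * jf * pp')"
    by (simp add: field_simps)
  also have "\<dots> = (Pk * jr * pp') / (Pk' * jf * pp')" by (simp only: assms(1))
  also have "\<dots> = (Pk * jr) / (Pk' * jf)" using assms(2) by (intro mult_divide_mult_cancel_right) auto
  also have "\<dots> = Pk / Pk' * (jr / jf)" by simp
  finally show ?thesis by (simp add: rj_accept_def)
qed

theorem proposition1:
  fixes P :: "'k pmf"                      \<comment> \<open>marginal pi(k) on the discrete model set\<close>
    and J :: "'k \<Rightarrow> 'k pmf"              \<comment> \<open>model-jump distributions j_k\<close>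
    and k k' :: 'k
    and nu :: "real \<Rightarrow> real"               \<comment> \<open>univariate reference density\<close>
    and p :: "real^'n::finite \<Rightarrow> real"      \<comment> \<open>conditional density pi_k on R^{n_k}\<close>
    and p' :: "real^'m::finite \<Rightarrow> real"     \<comment> \<open>conditional density pi_{k'} on R^{n_{k'}}\<close>
    and T :: "real^'n \<Rightarrow> real^'n" and U V :: "(real^'n) set"
    and T' :: "real^'m \<Rightarrow> real^'m" and U' V' :: "(real^'m) set"
    and hbar :: "real^'m \<Rightarrow> real^'m"
    and e :: "'n \<Rightarrow> 'm"
  assumes e_inj: "inj e"
    and nu_meas: "nu \<in> borel_measurable borel" and nu_nonneg: "\<And>x. nu x \<ge> 0"
    and nu_prob: "(\<integral>\<^sup>+ x. ennreal (nu x) \<partial>lborel) = 1"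
    and p_meas: "p \<in> borel_measurable borel" and p_nonneg: "\<And>x. p x \<ge> 0"
    and p_prob: "(\<integral>\<^sup>+ x. ennreal (p x) \<partial>lborel) = 1"
    and p_supp: "\<And>x. x \<notin> U \<Longrightarrow> p x = 0"
    and p'_meas: "p' \<in> borel_measurable borel" and p'_nonneg: "\<And>x. p' x \<ge> 0"
    and p'_prob: "(\<integral>\<^sup>+ x. ennreal (p' x) \<partial>lborel) = 1"
    and p'_supp: "\<And>x. x \<notin> U' \<Longrightarrow> p' x = 0"
    and T_diffeo: "diffeo_between U V T" and T_meas: "T \<in> borel_measurable borel"
    and T_push: "distr (density lborel (\<lambda>x. ennreal (p x))) lborel T
                   = density lborel (\<lambda>z. ennreal (prod_dens nu z))"
    and T'_diffeo: "diffeo_between U' V' T'" and T'_meas: "T' \<in> borel_measurable borel"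
    and T'_push: "distr (density lborel (\<lambda>x. ennreal (p' x))) lborel T'
                   = density lborel (\<lambda>z. ennreal (prod_dens nu z))"
    and hbar_diffeo: "diffeo_between UNIV UNIV hbar"
    and hbar_vol: "\<And>y. abs_jac hbar y = 1"
    and hbar_push: "distr (density lborel (\<lambda>z. ennreal (prod_dens nu z))) lborel hbar
                   = density lborel (\<lambda>z. ennreal (prod_dens nu z))"
  shows "(AE y in density lborel (\<lambda>y. ennreal (p (main_coords e y) * aux_dens nu e y)).
            rj_accept (pmf P k * p (main_coords e y)) (pmf P k' * p' (fwd_map e T U' T' hbar y))
                      (pmf (J k) k') (pmf (J k') k) (aux_dens nu e y) 1
                      (abs_jac (fwd_map e T U' T' hbar) y)
            = min 1 (pmf P k' / pmf P k * (pmf (J k') k / pmf (J k) k')))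
       \<and> (CARD('n) < CARD('m) \<longrightarrow>
          (AE th' in density lborel (\<lambda>x. ennreal (p' x)).
            rj_accept (pmf P k' * p' th') (pmf P k * p (main_coords e (rev_map e U T T' hbar th')))
                      (pmf (J k') k) (pmf (J k) k') 1 (aux_dens nu e (rev_map e U T T' hbar th'))
                      (abs_jac (rev_map e U T T' hbar) th')
            = min 1 (pmf P k / pmf P k' * (pmf (J k) k' / pmf (J k') k))))"
proof -
  let ?nn = "prod_dens nu :: real^'n \<Rightarrow> real"
  let ?nm = "prod_dens nu :: real^'m \<Rightarrow> real"
  define Ti where "Ti = the_inv_into U T"
  define Ti' where "Ti' = the_inv_into U' T'"
  define ih where "ih = inv hbar"
  define S where "S y = join_coords e (T (main_coords e y)) y" for y
  define R where "R w = join_coords e (Ti (main_coords e w)) w" for w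
  note [measurable] = nu_meas p_meas p'_meas T_meas T'_meas
  have nn0: "\<And>z. 0 \<le> ?nn z" unfolding prod_dens_def using nu_nonneg by (simp add: prod_nonneg)
  have nm0: "\<And>z. 0 \<le> ?nm z" unfolding prod_dens_def using nu_nonneg by (simp add: prod_nonneg)
  have ax0: "\<And>y. 0 \<le> aux_dens nu e y" unfolding aux_dens_def using nu_nonneg by (simp add: prod_nonneg)
  note TF = diffeo_facts[OF T_diffeo, folded Ti_def]
  note T'F = diffeo_facts[OF T'_diffeo, folded Ti'_def]
  note HF = diffeo_facts[OF hbar_diffeo]
  have hinj: "inj hbar" and hsurj: "surj hbar"
    using hbar_diffeo unfolding diffeo_between_def bij_betw_def by auto
  have ihe: "the_inv_into UNIV hbar = ih"
    unfolding ih_def using hinj hsurj by (intro ext the_inv_into_f_eq) (auto simp: surj_f_inv_f)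
  have h_ih: "\<And>z. hbar (ih z) = z" unfolding ih_def using hsurj by (simp add: surj_f_inv_f)
  have ih_h: "\<And>z. ih (hbar z) = z" unfolding ih_def using hinj by simp
  have dh: "\<And>z. hbar differentiable (at z)" using HF(7) by simp
  have dih: "\<And>z. ih differentiable (at z)" using HF(8) ihe by simp
  have jih: "\<And>z. abs_jac ih z = 1"
  proof -
    fix z
    have "abs_jac (the_inv_into UNIV hbar) (hbar (ih z)) * abs_jac hbar (ih z) = 1"
      using diffeo_inv_jac[OF hbar_diffeo] by simp
    then show "abs_jac ih z = 1" using ihe h_ih hbar_vol by simp
  qed
  have hcont: "continuous_on UNIV hbar"
    using dh by (intro differentiable_imp_continuous_on differentiable_at_imp_differentiable_on)
  have hbar_meas[measurable]: "hbar \<in> borel_measurable borel"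
    by (rule borel_measurable_continuous_onI[OF hcont])
  have pfin: "(\<integral>\<^sup>+x. ennreal (p x) \<partial>lborel) < \<infinity>" using p_prob by simp
  have p'fin: "(\<integral>\<^sup>+x. ennreal (p' x) \<partial>lborel) < \<infinity>" using p'_prob by simp
  have nmfin: "(\<integral>\<^sup>+x. ennreal (?nm x) \<partial>lborel) < \<infinity>"
    using mass_push[OF T'_meas p'_meas prod_dens_meas[OF nu_meas] T'_push] p'_prob by simp
  have F1: "AE x in lborel. x \<in> U \<longrightarrow> p x = ?nn (T x) * abs_jac T x"
    by (rule dens_push[OF T_diffeo T_meas p_meas prod_dens_meas[OF nu_meas] p_nonneg nn0 _ pfin T_push])
       (use p_supp in auto)
  have F2: "AE x in lborel. x \<in> U' \<longrightarrow> p' x = ?nm (T' x) * abs_jac T' x"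
    by (rule dens_push[OF T'_diffeo T'_meas p'_meas prod_dens_meas[OF nu_meas] p'_nonneg nm0 _ p'fin T'_push])
       (use p'_supp in auto)
  have F3: "AE x in lborel. x \<in> UNIV \<longrightarrow> ?nm x = ?nm (hbar x) * abs_jac hbar x"
    by (rule dens_push[OF hbar_diffeo hbar_meas prod_dens_meas[OF nu_meas] prod_dens_meas[OF nu_meas] nm0 nm0 _ nmfin hbar_push]) auto
  have F3': "AE x in lborel. ?nm x = ?nm (hbar x)"
    using F3 by eventually_elim (simp add: hbar_vol)
  have F4: "AE z in lborel. z \<notin> V' \<longrightarrow> ?nm z = 0"
    by (rule dens_supp[where W=U' and W'=V', OF T'_meas p'_meas prod_dens_meas[OF nu_meas] nm0 _ _ _ T'_push])
       (use p'_supp T'F in auto)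
  have F4n: "AE z in lborel. z \<notin> V \<longrightarrow> ?nn z = 0"
    by (rule dens_supp[where W=U and W'=V, OF T_meas p_meas prod_dens_meas[OF nu_meas] nn0 _ _ _ T_push])
       (use p_supp TF in auto)
  have main_S: "\<And>y. main_coords e (S y) = T (main_coords e y)" unfolding S_def by (simp add: main_join[OF e_inj])
  have main_R: "\<And>w. main_coords e (R w) = Ti (main_coords e w)" unfolding R_def by (simp add: main_join[OF e_inj])
  have aux_S: "\<And>y. aux_dens nu e (S y) = aux_dens nu e y" unfolding S_def by (simp add: aux_join)
  have aux_R: "\<And>w. aux_dens nu e (R w) = aux_dens nu e w" unfolding R_def by (simp add: aux_join)
  have R_S: "\<And>y. main_coords e y \<in> U \<Longrightarrow> R (S y) = y"
    unfolding R_def using main_S TF(5) by (simp add: S_def join_join join_main)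
  have S_R: "\<And>w. main_coords e w \<in> V \<Longrightarrow> S (R w) = w"
    unfolding S_def using main_R TF(6) by (simp add: R_def join_join join_main)
  have dS: "\<And>y. main_coords e y \<in> U \<Longrightarrow> S differentiable (at y)"
    unfolding S_def[abs_def] using block_jac(2)[OF e_inj] TF(7) by blast
  have jS: "\<And>y. main_coords e y \<in> U \<Longrightarrow> abs_jac S y = abs_jac T (main_coords e y)"
    unfolding S_def[abs_def] using block_jac(1)[OF e_inj] TF(7) by blast
  have dR: "\<And>w. main_coords e w \<in> V \<Longrightarrow> R differentiable (at w)"
    unfolding R_def[abs_def] using block_jac(2)[OF e_inj] TF(8) by blast
  have jR: "\<And>w. main_coords e w \<in> V \<Longrightarrow> abs_jac R w = abs_jac Ti (main_coords e w)"
    unfolding R_def[abs_def] using block_jac(1)[OF e_inj] TF(8) by blast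
  have nm_split: "\<And>y. ?nm y = ?nn (main_coords e y) * aux_dens nu e y"
    using prod_dens_split[OF e_inj] by blast
  have fwd_eq: "fwd_map e T U' T' hbar = (\<lambda>y. Ti' (hbar (S y)))"
    by (simp add: fwd_map_def S_def Ti'_def fun_eq_iff)
  have rev_eq: "rev_map e U T T' hbar = (\<lambda>t. R (ih (T' t)))"
    by (simp add: rev_map_def R_def Ti_def ih_def fun_eq_iff Let_def)
  have A1: "AE y in lborel. main_coords e y \<in> U \<longrightarrow> p (main_coords e y) = ?nn (T (main_coords e y)) * abs_jac T (main_coords e y)"
    using AE_main[OF e_inj F1] .
  have A3: "AE y in lborel. y \<in> {y. main_coords e y \<in> U} \<longrightarrow> ?nm (S y) = ?nm (hbar (S y))"
  proof (rule AE_transfer[where f = S and W' = "{w. main_coords e w \<in> V}" and finv = R and P = "\<lambda>x. ?nm x = ?nm (hbar x)"])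
    show "\<And>x. x \<in> {y. main_coords e y \<in> U} \<Longrightarrow> S x \<in> {w. main_coords e w \<in> V}" using main_S TF(3) by auto
    show "\<And>x. x \<in> {y. main_coords e y \<in> U} \<Longrightarrow> R (S x) = x" using R_S by auto
    show "R differentiable_on {w. main_coords e w \<in> V}" using dR by (intro differentiable_at_imp_differentiable_on) auto
    show "AE z in lborel. ?nm z = ?nm (hbar z)" using F3' .
  qed
  have A4: "AE y in lborel. y \<in> {y. main_coords e y \<in> U} \<longrightarrow> (hbar (S y) \<notin> V' \<longrightarrow> ?nm (hbar (S y)) = 0)"
  proof (rule AE_transfer[where f = "\<lambda>y. hbar (S y)" and W' = "{w. main_coords e (ih w) \<in> V}" and finv = "\<lambda>w. R (ih w)" and P = "\<lambda>z. z \<notin> V' \<longrightarrow> ?nm z = 0"])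
    show "\<And>x. x \<in> {y. main_coords e y \<in> U} \<Longrightarrow> hbar (S x) \<in> {w. main_coords e (ih w) \<in> V}" using ih_h main_S TF(3) by auto
    show "\<And>x. x \<in> {y. main_coords e y \<in> U} \<Longrightarrow> R (ih (hbar (S x))) = x" using ih_h R_S by auto
    show "(\<lambda>w. R (ih w)) differentiable_on {w. main_coords e (ih w) \<in> V}"
      by (intro differentiable_at_imp_differentiable_on differentiable_compose_at[OF dih] dR) auto
    show "AE z in lborel. z \<notin> V' \<longrightarrow> ?nm z = 0" using F4 .
  qed
  have A2: "AE y in lborel. y \<in> {y. main_coords e y \<in> U \<and> hbar (S y) \<in> V'} \<longrightarrow>
      (Ti' (hbar (S y)) \<in> U' \<longrightarrow> p' (Ti' (hbar (S y))) = ?nm (T' (Ti' (hbar (S y)))) * abs_jac T' (Ti' (hbar (S y))))"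
  proof (rule AE_transfer[where f = "\<lambda>y. Ti' (hbar (S y))" and W' = "{t. t \<in> U' \<and> main_coords e (ih (T' t)) \<in> V}"
        and finv = "\<lambda>t. R (ih (T' t))" and P = "\<lambda>x. x \<in> U' \<longrightarrow> p' x = ?nm (T' x) * abs_jac T' x"])
    fix x assume x: "x \<in> {y. main_coords e y \<in> U \<and> hbar (S y) \<in> V'}"
    then have x1: "main_coords e x \<in> U" and x2: "hbar (S x) \<in> V'" by auto
    have tt: "T' (Ti' (hbar (S x))) = hbar (S x)" using T'F(6)[OF x2] .
    show "Ti' (hbar (S x)) \<in> {t. t \<in> U' \<and> main_coords e (ih (T' t)) \<in> V}"
      using T'F(4)[OF x2] TF(3)[OF x1] by (simp add: tt ih_h main_S)
    show "R (ih (T' (Ti' (hbar (S x))))) = x"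
      by (simp add: tt ih_h R_S[OF x1])
  next
    show "(\<lambda>t. R (ih (T' t))) differentiable_on {t. t \<in> U' \<and> main_coords e (ih (T' t)) \<in> V}"
    proof (intro differentiable_at_imp_differentiable_on)
      fix t assume t: "t \<in> {t. t \<in> U' \<and> main_coords e (ih (T' t)) \<in> V}"
      have "(\<lambda>t. ih (T' t)) differentiable (at t)" using t T'F(7) dih by (auto intro: differentiable_compose_at[of T' t ih])
      then show "(\<lambda>t. R (ih (T' t))) differentiable (at t)" using t dR by (auto intro: differentiable_compose_at[of "\<lambda>t. ih (T' t)" t R])
    qed
    show "AE z in lborel. z \<in> U' \<longrightarrow> p' z = ?nm (T' z) * abs_jac T' z" using F2 .
  qed
  have P1: "AE y in density lborel (\<lambda>y. ennreal (p (main_coords e y) * aux_dens nu e y)).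
            rj_accept (pmf P k * p (main_coords e y)) (pmf P k' * p' (fwd_map e T U' T' hbar y))
                      (pmf (J k) k') (pmf (J k') k) (aux_dens nu e y) 1
                      (abs_jac (fwd_map e T U' T' hbar) y)
            = min 1 (pmf P k' / pmf P k * (pmf (J k') k / pmf (J k) k'))"
  proof (subst AE_density)
    show "(\<lambda>y. ennreal (p (main_coords e y) * aux_dens nu e y)) \<in> borel_measurable lborel" by measurable
    show "AE y in lborel. 0 < ennreal (p (main_coords e y) * aux_dens nu e y) \<longrightarrow>
            rj_accept (pmf P k * p (main_coords e y)) (pmf P k' * p' (fwd_map e T U' T' hbar y))
                      (pmf (J k) k') (pmf (J k') k) (aux_dens nu e y) 1
                      (abs_jac (fwd_map e T U' T' hbar) y)
            = min 1 (pmf P k' / pmf P k * (pmf (J k') k / pmf (J k) k'))"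
      using A1 A3 A4 A2
    proof eventually_elim
      case (elim y)
      show ?case
      proof
        assume pos: "0 < ennreal (p (main_coords e y) * aux_dens nu e y)"
        define m where "m = main_coords e y"
        have c: "p m * aux_dens nu e y > 0" using pos unfolding m_def by simp
        then have pm: "p m \<noteq> 0" by auto
        have mU: "m \<in> U" using pm p_supp by blast
        have e1: "p m = ?nn (T m) * abs_jac T m" using elim(1) mU unfolding m_def by simp
        have e2: "?nm (S y) = ?nn (T m) * aux_dens nu e y" using nm_split main_S aux_S unfolding m_def by simp
        have e3: "?nm (S y) * abs_jac T m = p m * aux_dens nu e y" using e1 e2 by simp
        have nz: "?nm (S y) \<noteq> 0" using e3 c by auto
        have e4: "?nm (hbar (S y)) = ?nm (S y)" using elim(2) mU unfolding m_def by simp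
        have hV': "hbar (S y) \<in> V'" using elim(3) mU e4 nz unfolding m_def by auto
        define f where "f = Ti' (hbar (S y))"
        have fU': "f \<in> U'" unfolding f_def using T'F(4) hV' .
        have T'f: "T' f = hbar (S y)" unfolding f_def using T'F(6) hV' .
        have e5: "p' f = ?nm (hbar (S y)) * abs_jac T' f" using elim(4) mU hV' fU' T'f unfolding m_def f_def by simp
        have dSy: "S differentiable (at y)" using dS mU unfolding m_def by simp
        have dhS: "(\<lambda>y. hbar (S y)) differentiable (at y)" using differentiable_compose_at[OF dSy dh] .
        have jf: "abs_jac (\<lambda>y. Ti' (hbar (S y))) y = abs_jac Ti' (hbar (S y)) * (abs_jac hbar (S y) * abs_jac S y)"
          using abs_jac_compose[OF dhS T'F(8)[OF hV']] abs_jac_compose[OF dSy dh] by simp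
        have inv: "abs_jac Ti' (T' f) * abs_jac T' f = 1" using diffeo_inv_jac[OF T'_diffeo fU'] Ti'_def by simp
        have jSy: "abs_jac S y = abs_jac T m" using jS mU unfolding m_def by simp
        have "p' f * abs_jac (\<lambda>y. Ti' (hbar (S y))) y
              = (?nm (S y) * abs_jac T m) * (abs_jac Ti' (T' f) * abs_jac T' f)"
          unfolding jf e5 T'f jSy e4 hbar_vol by (simp add: algebra_simps)
        then have key: "p' f * abs_jac (\<lambda>y. Ti' (hbar (S y))) y = p m * aux_dens nu e y"
          using inv e3 by simp
        show "rj_accept (pmf P k * p (main_coords e y)) (pmf P k' * p' (fwd_map e T U' T' hbar y))
                      (pmf (J k) k') (pmf (J k') k) (aux_dens nu e y) 1
                      (abs_jac (fwd_map e T U' T' hbar) y)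
            = min 1 (pmf P k' / pmf P k * (pmf (J k') k / pmf (J k) k'))"
          unfolding fwd_eq using rj_fwd[OF key c] unfolding m_def f_def by simp
      qed
    qed
  qed
  have B3: "AE t in lborel. t \<in> U' \<longrightarrow> ?nm (ih (T' t)) = ?nm (hbar (ih (T' t)))"
  proof (rule AE_transfer[where f = "\<lambda>t. ih (T' t)" and W' = "{w. hbar w \<in> V'}" and finv = "\<lambda>w. Ti' (hbar w)"
        and P = "\<lambda>x. ?nm x = ?nm (hbar x)"])
    show "\<And>x. x \<in> U' \<Longrightarrow> ih (T' x) \<in> {w. hbar w \<in> V'}" using h_ih T'F(3) by auto
    show "\<And>x. x \<in> U' \<Longrightarrow> Ti' (hbar (ih (T' x))) = x" using h_ih T'F(5) by auto
    show "(\<lambda>w. Ti' (hbar w)) differentiable_on {w. hbar w \<in> V'}"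
      by (intro differentiable_at_imp_differentiable_on differentiable_compose_at[OF dh] T'F(8)) auto
    show "AE z in lborel. ?nm z = ?nm (hbar z)" using F3' .
  qed
  have F4n': "AE y in lborel. main_coords e y \<notin> V \<longrightarrow> ?nn (main_coords e y) = 0"
    using AE_main[OF e_inj F4n] .
  have B4: "AE t in lborel. t \<in> U' \<longrightarrow> (main_coords e (ih (T' t)) \<notin> V \<longrightarrow> ?nn (main_coords e (ih (T' t))) = 0)"
  proof (rule AE_transfer[where f = "\<lambda>t. ih (T' t)" and W' = "{w. hbar w \<in> V'}" and finv = "\<lambda>w. Ti' (hbar w)"
        and P = "\<lambda>y. main_coords e y \<notin> V \<longrightarrow> ?nn (main_coords e y) = 0"])
    show "\<And>x. x \<in> U' \<Longrightarrow> ih (T' x) \<in> {w. hbar w \<in> V'}" using h_ih T'F(3) by auto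
    show "\<And>x. x \<in> U' \<Longrightarrow> Ti' (hbar (ih (T' x))) = x" using h_ih T'F(5) by auto
    show "(\<lambda>w. Ti' (hbar w)) differentiable_on {w. hbar w \<in> V'}"
      by (intro differentiable_at_imp_differentiable_on differentiable_compose_at[OF dh] T'F(8)) auto
    show "AE y in lborel. main_coords e y \<notin> V \<longrightarrow> ?nn (main_coords e y) = 0" using F4n' .
  qed
  have B1: "AE t in lborel. t \<in> {t. t \<in> U' \<and> main_coords e (ih (T' t)) \<in> V} \<longrightarrow>
     (main_coords e (R (ih (T' t))) \<in> U \<longrightarrow> p (main_coords e (R (ih (T' t)))) =
        ?nn (T (main_coords e (R (ih (T' t))))) * abs_jac T (main_coords e (R (ih (T' t)))))"
  proof (rule AE_transfer[where f = "\<lambda>t. R (ih (T' t))" and W' = "{r. main_coords e r \<in> U \<and> hbar (S r) \<in> V'}"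
        and finv = "\<lambda>r. Ti' (hbar (S r))"
        and P = "\<lambda>y. main_coords e y \<in> U \<longrightarrow> p (main_coords e y) = ?nn (T (main_coords e y)) * abs_jac T (main_coords e y)"])
    show "\<And>x. x \<in> {t. t \<in> U' \<and> main_coords e (ih (T' t)) \<in> V} \<Longrightarrow> R (ih (T' x)) \<in> {r. main_coords e r \<in> U \<and> hbar (S r) \<in> V'}"
      using main_R TF(4) S_R h_ih T'F(3) by auto
    show "\<And>x. x \<in> {t. t \<in> U' \<and> main_coords e (ih (T' t)) \<in> V} \<Longrightarrow> Ti' (hbar (S (R (ih (T' x))))) = x"
      using S_R h_ih T'F(5) by auto
    show "(\<lambda>r. Ti' (hbar (S r))) differentiable_on {r. main_coords e r \<in> U \<and> hbar (S r) \<in> V'}"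
    proof (intro differentiable_at_imp_differentiable_on)
      fix r assume r: "r \<in> {r. main_coords e r \<in> U \<and> hbar (S r) \<in> V'}"
      have "(\<lambda>r. hbar (S r)) differentiable (at r)" using r dS dh by (auto intro: differentiable_compose_at[of S r hbar])
      then show "(\<lambda>r. Ti' (hbar (S r))) differentiable (at r)" using r T'F(8) by (auto intro: differentiable_compose_at[of "\<lambda>r. hbar (S r)" r Ti'])
    qed
    show "AE y in lborel. main_coords e y \<in> U \<longrightarrow> p (main_coords e y) = ?nn (T (main_coords e y)) * abs_jac T (main_coords e y)"
      using A1 .
  qed
  have P2: "AE th' in density lborel (\<lambda>x. ennreal (p' x)).
            rj_accept (pmf P k' * p' th') (pmf P k * p (main_coords e (rev_map e U T T' hbar th')))
                      (pmf (J k') k) (pmf (J k) k') 1 (aux_dens nu e (rev_map e U T T' hbar th'))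
                      (abs_jac (rev_map e U T T' hbar) th')
            = min 1 (pmf P k / pmf P k' * (pmf (J k) k' / pmf (J k') k))"
  proof (subst AE_density)
    show "(\<lambda>x. ennreal (p' x)) \<in> borel_measurable lborel" by measurable
    show "AE th' in lborel. 0 < ennreal (p' th') \<longrightarrow>
            rj_accept (pmf P k' * p' th') (pmf P k * p (main_coords e (rev_map e U T T' hbar th')))
                      (pmf (J k') k) (pmf (J k) k') 1 (aux_dens nu e (rev_map e U T T' hbar th'))
                      (abs_jac (rev_map e U T T' hbar) th')
            = min 1 (pmf P k / pmf P k' * (pmf (J k) k' / pmf (J k') k))"
      using F2 B3 B4 B1
    proof eventually_elim
      case (elim t)
      show ?case
      proof
        assume pos: "0 < ennreal (p' t)"
        have c: "p' t > 0" using pos by simp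
        have tU': "t \<in> U'" using c p'_supp by force
        define w where "w = ih (T' t)"
        have e1: "p' t = ?nm (T' t) * abs_jac T' t" using elim(1) tU' by simp
        have nz: "?nm (T' t) \<noteq> 0" using e1 c by auto
        have e2: "?nm w = ?nm (T' t)" using elim(2) tU' h_ih unfolding w_def by simp
        have "?nn (main_coords e w) \<noteq> 0" using e2 nz nm_split[of w] by auto
        then have mV: "main_coords e w \<in> V" using elim(3) tU' unfolding w_def by auto
        define x where "x = Ti (main_coords e w)"
        have xU: "x \<in> U" unfolding x_def using TF(4) mV .
        have Tx: "T x = main_coords e w" unfolding x_def using TF(6) mV .
        have mR: "main_coords e (R w) = x" unfolding x_def using main_R .
        have e3: "p x = ?nn (main_coords e w) * abs_jac T x"
          using elim(4) tU' mV xU mR Tx unfolding w_def by simp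
        have dit: "(\<lambda>t. ih (T' t)) differentiable (at t)" using differentiable_compose_at[of T' t ih] T'F(7)[OF tU'] dih by blast
        have jr: "abs_jac (\<lambda>t. R (ih (T' t))) t = abs_jac R w * (abs_jac ih (T' t) * abs_jac T' t)"
          using abs_jac_compose[OF dit, of R] abs_jac_compose[OF T'F(7)[OF tU'] dih] dR[OF mV] unfolding w_def by simp
        have jRw: "abs_jac R w = abs_jac Ti (main_coords e w)" using jR mV .
        have inv: "abs_jac Ti (T x) * abs_jac T x = 1" using diffeo_inv_jac[OF T_diffeo xU] Ti_def by simp
        have "p x * aux_dens nu e (R w) * abs_jac (\<lambda>t. R (ih (T' t))) t
            = (?nn (main_coords e w) * aux_dens nu e w) * abs_jac T' t * (abs_jac Ti (T x) * abs_jac T x)"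
          unfolding jr e3 jRw aux_R jih Tx by (simp add: algebra_simps)
        then have key: "p x * aux_dens nu e (R w) * abs_jac (\<lambda>t. R (ih (T' t))) t = p' t"
          using inv nm_split[of w] e2 e1 by simp
        show "rj_accept (pmf P k' * p' t) (pmf P k * p (main_coords e (rev_map e U T T' hbar t)))
                      (pmf (J k') k) (pmf (J k) k') 1 (aux_dens nu e (rev_map e U T T' hbar t))
                      (abs_jac (rev_map e U T T' hbar) t)
            = min 1 (pmf P k / pmf P k' * (pmf (J k) k' / pmf (J k') k))"
          unfolding rev_eq using rj_rev[OF key c] mR unfolding w_def by simp
      qed
    qed
  qed
  show ?thesis using P1 P2 by blast
qed

end
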